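(* Let $A$ be an integral domain with quotient field $K$, let $E$ be a $K$-vector space (regarded as an $A$-module), and let $R=A\propto E$ be the trivial ring extension of $A$ by $E$. Then $R$ is an elementary divisor ring if and only if (1) $A$ is an elementary divisor ring and (2) $\dim_K(E)=1$.
   Context: All rings are commutative with identity. For a ring $A$ and an $A$-module $E$, the trivial ring extension $A\propto E$ is the set of pairs $(a,e)$ with $a\in A$, $e\in E$, with componentwise addition and multiplication $(a,e)(b,f)=(ab,af+be)$. A matrix $M$ (not necessarily square) over a ring $S$ admits diagonal reduction if there are invertible $P,Q$ over $S$ with $PMQ$ diagonal $(d_{ij})$ and $d_{ii}\mid d_{(i+1)(i+1)}$ for each $i$; $S$ is an elementary divisor ring if every matrix over $S$ admits diagonal reduction. *)

theory Defs
  imports "HOL.Vector_Spaces" "HOL-Algebra.Ring" "HOL-Algebra.Divisibility" "HOL-Computational_Algebra.Fraction_Field"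
begin

text \<open>Matrices over a ring record R: functions nat => nat => 'r, only the entries
  with row index < m and column index < n are relevant.\<close>

definition is_mat :: "('r, 'm) ring_scheme \<Rightarrow> nat \<Rightarrow> nat \<Rightarrow> (nat \<Rightarrow> nat \<Rightarrow> 'r) \<Rightarrow> bool" where
  "is_mat R m n M \<longleftrightarrow> (\<forall>i<m. \<forall>j<n. M i j \<in> carrier R)"

definition mat_mult :: "('r, 'm) ring_scheme \<Rightarrow> (nat \<Rightarrow> nat \<Rightarrow> 'r) \<Rightarrow> (nat \<Rightarrow> nat \<Rightarrow> 'r) \<Rightarrow> nat
    \<Rightarrow> (nat \<Rightarrow> nat \<Rightarrow> 'r)" where
  "mat_mult R M N n = (\<lambda>i k. \<Oplus>\<^bsub>R\<^esub> j\<in>{..<n}. M i j \<otimes>\<^bsub>R\<^esub> N j k)"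

definition mat_eq :: "nat \<Rightarrow> nat \<Rightarrow> (nat \<Rightarrow> nat \<Rightarrow> 'r) \<Rightarrow> (nat \<Rightarrow> nat \<Rightarrow> 'r) \<Rightarrow> bool" where
  "mat_eq m n M N \<longleftrightarrow> (\<forall>i<m. \<forall>j<n. M i j = N i j)"

definition id_mat :: "('r, 'm) ring_scheme \<Rightarrow> nat \<Rightarrow> nat \<Rightarrow> 'r" where
  "id_mat R = (\<lambda>i j. if i = j then \<one>\<^bsub>R\<^esub> else \<zero>\<^bsub>R\<^esub>)"

definition invertible_mat :: "('r, 'm) ring_scheme \<Rightarrow> nat \<Rightarrow> (nat \<Rightarrow> nat \<Rightarrow> 'r) \<Rightarrow> bool" where
  "invertible_mat R n P \<longleftrightarrow> is_mat R n n P \<and>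
     (\<exists>Q. is_mat R n n Q \<and> mat_eq n n (mat_mult R P Q n) (id_mat R)
                         \<and> mat_eq n n (mat_mult R Q P n) (id_mat R))"

definition admits_diagonal_reduction ::
    "('r, 'm) ring_scheme \<Rightarrow> nat \<Rightarrow> nat \<Rightarrow> (nat \<Rightarrow> nat \<Rightarrow> 'r) \<Rightarrow> bool" where
  "admits_diagonal_reduction R m n M \<longleftrightarrow>
     (\<exists>P Q. invertible_mat R m P \<and> invertible_mat R n Q \<and>
        (let D = mat_mult R (mat_mult R P M m) Q n in
           (\<forall>i<m. \<forall>j<n. i \<noteq> j \<longrightarrow> D i j = \<zero>\<^bsub>R\<^esub>) \<and>
           (\<forall>i. Suc i < min m n \<longrightarrow> D i i divides\<^bsub>R\<^esub> D (Suc i) (Suc i))))"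

definition elementary_divisor_ring :: "('r, 'm) ring_scheme \<Rightarrow> bool" where
  "elementary_divisor_ring R \<longleftrightarrow>
     (\<forall>m n M. is_mat R m n M \<longrightarrow> admits_diagonal_reduction R m n M)"

definition class_ring :: "('a::comm_ring_1) ring" where
  "class_ring = \<lparr>carrier = UNIV, monoid.mult = (*), one = 1, zero = 0, add = (+)\<rparr>"

definition triv_ext :: "('a::comm_ring_1 \<Rightarrow> 'b::ab_group_add \<Rightarrow> 'b) \<Rightarrow> ('a \<times> 'b) ring" where
  "triv_ext smul = \<lparr>carrier = UNIV,
     monoid.mult = (\<lambda>x y. (fst x * fst y, smul (fst x) (snd y) + smul (fst y) (snd x))),
     one = (1, 0), zero = (0, 0),
     add = (\<lambda>x y. (fst x + fst y, snd x + snd y))\<rparr>"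

end

theory Submission
  imports Defs
begin

lemma (in cring) finsum_swap_nat:
  fixes n p :: nat
  assumes "carrier R = UNIV"
  shows "(\<Oplus>i\<in>{..<n}. \<Oplus>j\<in>{..<p}. f i j) = (\<Oplus>j\<in>{..<p}. \<Oplus>i\<in>{..<n}. f i j)"
proof (induction n)
  case 0
  then show ?case using assms by (simp add: finsum_zero)
next
  case (Suc n)
  have "(\<Oplus>i\<in>{..<Suc n}. \<Oplus>j\<in>{..<p}. f i j) = (\<Oplus>j\<in>{..<p}. f n j) \<oplus> (\<Oplus>i\<in>{..<n}. \<Oplus>j\<in>{..<p}. f i j)"
    using assms by (simp add: lessThan_Suc)
  also have "\<dots> = (\<Oplus>j\<in>{..<p}. f n j) \<oplus> (\<Oplus>j\<in>{..<p}. \<Oplus>i\<in>{..<n}. f i j)" using Suc by simp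
  also have "\<dots> = (\<Oplus>j\<in>{..<p}. f n j \<oplus> (\<Oplus>i\<in>{..<n}. f i j))"
    using assms by (simp add: finsum_addf)
  also have "\<dots> = (\<Oplus>j\<in>{..<p}. \<Oplus>i\<in>{..<Suc n}. f i j)"
    using assms by (simp add: lessThan_Suc)
  finally show ?case .
qed

lemma (in cring) mat_mult_assoc:
  assumes "carrier R = UNIV"
  shows "mat_mult R (mat_mult R A B n) C p = mat_mult R A (mat_mult R B C p) n"
proof (intro ext)
  fix i l
  have "mat_mult R (mat_mult R A B n) C p i l = (\<Oplus>k\<in>{..<p}. \<Oplus>j\<in>{..<n}. A i j \<otimes> B j k \<otimes> C k l)"
    unfolding mat_mult_def using assms by (simp add: finsum_ldistr)
  also have "\<dots> = (\<Oplus>j\<in>{..<n}. \<Oplus>k\<in>{..<p}. A i j \<otimes> (B j k \<otimes> C k l))"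
    using finsum_swap_nat[OF assms] assms by (simp add: m_assoc)
  also have "\<dots> = mat_mult R A (mat_mult R B C p) n i l"
    unfolding mat_mult_def using assms by (simp add: finsum_rdistr)
  finally show "mat_mult R (mat_mult R A B n) C p i l = mat_mult R A (mat_mult R B C p) n i l" .
qed

context cring begin

lemma mat_mult_cong_left:
  assumes U: "carrier R = UNIV" and "\<forall>i<m. \<forall>j<n. A i j = A' i j" "i < m"
  shows "mat_mult R A B n i k = mat_mult R A' B n i k"
  unfolding mat_mult_def using assms by (intro finsum_cong') auto

lemma mat_mult_cong_right:
  assumes U: "carrier R = UNIV" and "\<forall>j<n. \<forall>k<p. B j k = B' j k" "k < p"
  shows "mat_mult R A B n i k = mat_mult R A B' n i k"
  unfolding mat_mult_def using assms by (intro finsum_cong') auto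

lemma mat_mult_id_left:
  assumes "carrier R = UNIV" "i < m"
  shows "mat_mult R (id_mat R) M m i k = M i k"
proof -
  have "mat_mult R (id_mat R) M m i k = (\<Oplus>j\<in>{..<m}. if i = j then M j k else \<zero>)"
    unfolding mat_mult_def id_mat_def using assms by (intro finsum_cong') auto
  also have "\<dots> = M i k" using assms add.finprod_singleton[of i "{..<m}" "\<lambda>j. M j k"] by simp
  finally show ?thesis .
qed

lemma mat_mult_id_right:
  assumes "carrier R = UNIV" "k < n"
  shows "mat_mult R M (id_mat R) n i k = M i k"
proof -
  have "mat_mult R M (id_mat R) n i k = (\<Oplus>j\<in>{..<n}. if k = j then M i j else \<zero>)"
    unfolding mat_mult_def id_mat_def using assms by (intro finsum_cong') auto
  also have "\<dots> = M i k" using assms add.finprod_singleton[of k "{..<n}" "\<lambda>j. M i j"] by simp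
  finally show ?thesis .
qed

lemma mat_eq_inv_mult:
  assumes U: "carrier R = UNIV" and 1: "mat_eq n n (mat_mult R P Q n) (id_mat R)"
    and 2: "mat_eq n n (mat_mult R Q' P' n) (id_mat R)"
  shows "mat_eq n n (mat_mult R (mat_mult R P Q' n) (mat_mult R P' Q n) n) (id_mat R)"
  unfolding mat_eq_def
proof (intro allI impI)
  fix i j assume ij: "i < n" "j < n"
  have "mat_mult R (mat_mult R P Q' n) (mat_mult R P' Q n) n i j
     = mat_mult R P (mat_mult R (mat_mult R Q' P' n) Q n) n i j"
    using mat_mult_assoc[OF U] by metis
  also have "\<dots> = mat_mult R P (mat_mult R (id_mat R) Q n) n i j"
    by (rule mat_mult_cong_right[OF U, of n n]) (use ij in \<open>auto intro!: mat_mult_cong_left[OF U, of n n] simp: 2[unfolded mat_eq_def]\<close>)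
  also have "\<dots> = mat_mult R P Q n i j"
    by (rule mat_mult_cong_right[OF U, of n n]) (use ij U in \<open>auto simp: mat_mult_id_left\<close>)
  also have "\<dots> = id_mat R i j" using 1 ij unfolding mat_eq_def by auto
  finally show "mat_mult R (mat_mult R P Q' n) (mat_mult R P' Q n) n i j = id_mat R i j" .
qed

lemma invertible_mult:
  assumes U: "carrier R = UNIV" "invertible_mat R n P" "invertible_mat R n Q"
  shows "invertible_mat R n (mat_mult R P Q n)"
proof -
  obtain P' where P': "mat_eq n n (mat_mult R P P' n) (id_mat R)" "mat_eq n n (mat_mult R P' P n) (id_mat R)"
    using assms unfolding invertible_mat_def by auto
  obtain Q' where Q': "mat_eq n n (mat_mult R Q Q' n) (id_mat R)" "mat_eq n n (mat_mult R Q' Q n) (id_mat R)"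
    using assms unfolding invertible_mat_def by auto
  show ?thesis unfolding invertible_mat_def
    apply (intro conjI exI[of _ "mat_mult R Q' P' n"])
    using U apply (simp add: is_mat_def)
    using U apply (simp add: is_mat_def)
    using mat_eq_inv_mult[OF U(1) P'(1) Q'(1)] apply simp
    using mat_eq_inv_mult[OF U(1) Q'(2) P'(2)] apply simp
    done
qed

lemma admits_left:
  assumes U: "carrier R = UNIV" and inv: "invertible_mat R m P"
    and a: "admits_diagonal_reduction R m n (mat_mult R P M m)"
  shows "admits_diagonal_reduction R m n M"
proof -
  obtain P1 Q1 where "invertible_mat R m P1" "invertible_mat R n Q1"
    "let D = mat_mult R (mat_mult R P1 (mat_mult R P M m) m) Q1 n in
           (\<forall>i<m. \<forall>j<n. i \<noteq> j \<longrightarrow> D i j = \<zero>) \<and>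
           (\<forall>i. Suc i < min m n \<longrightarrow> D i i divides D (Suc i) (Suc i))"
    using a unfolding admits_diagonal_reduction_def by auto
  then show ?thesis unfolding admits_diagonal_reduction_def
    by (intro exI[of _ "mat_mult R P1 P m"] exI[of _ Q1])
      (simp add: invertible_mult[OF U] inv mat_mult_assoc[OF U])
qed

lemma admits_right:
  assumes U: "carrier R = UNIV" and inv: "invertible_mat R n Q"
    and a: "admits_diagonal_reduction R m n (mat_mult R M Q n)"
  shows "admits_diagonal_reduction R m n M"
proof -
  obtain P1 Q1 where "invertible_mat R m P1" "invertible_mat R n Q1"
    "let D = mat_mult R (mat_mult R P1 (mat_mult R M Q n) m) Q1 n in
           (\<forall>i<m. \<forall>j<n. i \<noteq> j \<longrightarrow> D i j = \<zero>) \<and>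
           (\<forall>i. Suc i < min m n \<longrightarrow> D i i divides D (Suc i) (Suc i))"
    using a unfolding admits_diagonal_reduction_def by auto
  then show ?thesis unfolding admits_diagonal_reduction_def
    by (intro exI[of _ P1] exI[of _ "mat_mult R Q Q1 n"])
      (simp add: invertible_mult[OF U] inv mat_mult_assoc[OF U])
qed

lemma admits_cong:
  assumes U: "carrier R = UNIV" and "\<forall>i<m. \<forall>j<n. M i j = M' i j"
    and a: "admits_diagonal_reduction R m n M'"
  shows "admits_diagonal_reduction R m n M"
proof -
  have e: "mat_mult R (mat_mult R P M m) Q n = mat_mult R (mat_mult R P M' m) Q n" for P Q
  proof (intro ext)
    fix i l
    show "mat_mult R (mat_mult R P M m) Q n i l = mat_mult R (mat_mult R P M' m) Q n i l"
      unfolding mat_mult_def using assms(2) U by (intro finsum_cong' refl arg_cong2[where f="(\<otimes>)"]) auto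
  qed
  show ?thesis using a unfolding admits_diagonal_reduction_def e .
qed

lemma id_invertible:
  assumes U: "carrier R = UNIV"
  shows "invertible_mat R n (id_mat R)"
  unfolding invertible_mat_def
  by (intro conjI exI[of _ "id_mat R"]) (auto simp: U is_mat_def mat_eq_def mat_mult_id_left)

lemma admits_diag:
  assumes U: "carrier R = UNIV"
    and "\<forall>i<m. \<forall>j<n. i \<noteq> j \<longrightarrow> D i j = \<zero>"
    and "\<forall>i. Suc i < min m n \<longrightarrow> D i i divides D (Suc i) (Suc i)"
  shows "admits_diagonal_reduction R m n D"
proof -
  have e: "mat_mult R (mat_mult R (id_mat R) D m) (id_mat R) n i j = D i j" if "i < m" "j < n" for i j
    using that U by (simp add: mat_mult_id_right mat_mult_id_left)
  show ?thesis unfolding admits_diagonal_reduction_def Let_def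
    apply (intro exI[of _ "id_mat R"] conjI id_invertible[OF U])
    using assms e apply simp
    using assms e by auto
qed

end

lemma (in ring_hom_cring) hom_mat_mult:
  assumes "carrier R = UNIV"
  shows "h (mat_mult R A B n i k) = mat_mult S (\<lambda>i j. h (A i j)) (\<lambda>i j. h (B i j)) n i k"
  unfolding mat_mult_def using assms by (simp add: comp_def)

lemma (in ring_hom_cring) hom_invertible:
  assumes U: "carrier R = UNIV" "carrier S = UNIV" and inv: "invertible_mat R n P"
  shows "invertible_mat S n (\<lambda>i j. h (P i j))"
proof -
  obtain P' where P': "mat_eq n n (mat_mult R P P' n) (id_mat R)" "mat_eq n n (mat_mult R P' P n) (id_mat R)"
    using inv unfolding invertible_mat_def by auto
  have hid: "h (id_mat R i j) = id_mat S i j" for i j unfolding id_mat_def by simp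
  show ?thesis unfolding invertible_mat_def
    apply (intro conjI exI[of _ "\<lambda>i j. h (P' i j)"])
    using U apply (simp add: is_mat_def)
    using U apply (simp add: is_mat_def)
    using P' apply (simp add: mat_eq_def flip: hom_mat_mult[OF U(1)] hid)
    using P' apply (simp add: mat_eq_def flip: hom_mat_mult[OF U(1)] hid)
    done
qed

lemma EDR_hom:
  assumes hc: "ring_hom_cring R S h" and U: "carrier R = UNIV" "carrier S = UNIV"
    and s: "surj h" and E: "elementary_divisor_ring R"
  shows "elementary_divisor_ring S"
  unfolding elementary_divisor_ring_def
proof (intro allI impI)
  interpret ring_hom_cring R S h by fact
  fix m n M
  define M' where "M' = (\<lambda>(i::nat) (j::nat). SOME x. h x = M i j)"
  have hM: "(\<lambda>i j. h (M' i j)) = M"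
    unfolding M'_def using s by (auto intro!: ext someI_ex[where P="\<lambda>x. h x = M _ _"] simp: surj_def) (metis)
  have "admits_diagonal_reduction R m n M'" using E U unfolding elementary_divisor_ring_def is_mat_def by auto
  then obtain P Q where PQ: "invertible_mat R m P" "invertible_mat R n Q"
    and D: "let D = mat_mult R (mat_mult R P M' m) Q n in
           (\<forall>i<m. \<forall>j<n. i \<noteq> j \<longrightarrow> D i j = \<zero>\<^bsub>R\<^esub>) \<and>
           (\<forall>i. Suc i < min m n \<longrightarrow> D i i divides\<^bsub>R\<^esub> D (Suc i) (Suc i))"
    unfolding admits_diagonal_reduction_def by auto
  define D where "D = mat_mult R (mat_mult R P M' m) Q n"
  have hD: "mat_mult S (mat_mult S (\<lambda>i j. h (P i j)) M m) (\<lambda>i j. h (Q i j)) n = (\<lambda>i j. h (D i j))"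
    unfolding D_def by (intro ext) (simp add: hom_mat_mult[OF U(1)] hM)
  have dv: "h a divides\<^bsub>S\<^esub> h b" if "a divides\<^bsub>R\<^esub> b" for a b
    using that U unfolding factor_def by auto
  show "admits_diagonal_reduction S m n M"
    unfolding admits_diagonal_reduction_def Let_def
    apply (rule exI[of _ "\<lambda>i j. h (P i j)"], rule exI[of _ "\<lambda>i j. h (Q i j)"], intro conjI)
      apply (rule hom_invertible[OF U PQ(1)])
     apply (rule hom_invertible[OF U PQ(2)])
    unfolding hD using D dv unfolding D_def Let_def by auto
qed

lemma class_ring_simps [simp]:
  "carrier (class_ring :: 'a::comm_ring_1 ring) = UNIV"
  "monoid.mult (class_ring :: 'a::comm_ring_1 ring) = (*)"
  "ring.add (class_ring :: 'a::comm_ring_1 ring) = (+)"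
  "monoid.one (class_ring :: 'a::comm_ring_1 ring) = 1"
  "ring.zero (class_ring :: 'a::comm_ring_1 ring) = 0"
  by (simp_all add: class_ring_def)

lemma class_ring_cring: "cring (class_ring :: 'a::comm_ring_1 ring)"
  by (intro cringI abelian_groupI comm_monoidI)
     (auto simp: algebra_simps intro: exI[of _ "- _"])

lemma finsum_class: "finite A \<Longrightarrow> finsum (class_ring :: 'a::comm_ring_1 ring) f A = sum f A"
proof -
  interpret cring "class_ring :: 'a ring" by (rule class_ring_cring)
  show "finite A \<Longrightarrow> finsum (class_ring :: 'a::comm_ring_1 ring) f A = sum f A"
    by (induct A rule: finite_induct) (simp_all add: finsum_insert)
qed

lemma mat_mult_class: "mat_mult (class_ring :: 'a::comm_ring_1 ring) A B n = (\<lambda>i k. \<Sum>j<n. A i j * B j k)"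
  unfolding mat_mult_def by (simp add: finsum_class)

lemma divides_class: "(a divides\<^bsub>(class_ring :: 'a::comm_ring_1 ring)\<^esub> b) \<longleftrightarrow> a dvd b"
  unfolding factor_def dvd_def by auto

lemma triv_ext_simps [simp]:
  "carrier (triv_ext sm) = UNIV"
  "monoid.mult (triv_ext sm) = (\<lambda>x y. (fst x * fst y, sm (fst x) (snd y) + sm (fst y) (snd x)))"
  "ring.add (triv_ext sm) = (\<lambda>x y. (fst x + fst y, snd x + snd y))"
  "monoid.one (triv_ext sm) = (1, 0)"
  "ring.zero (triv_ext sm) = (0, 0)"
  by (simp_all add: triv_ext_def)

lemma (in module) triv_cring: "cring (triv_ext scale)"
  apply (intro cringI abelian_groupI comm_monoidI)
  apply (auto simp: algebra_simps)
  apply (metis add.right_inverse)+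
  done

lemma (in module) finsum_triv:
  "finite A \<Longrightarrow> finsum (triv_ext scale) f A = (\<Sum>a\<in>A. fst (f a), \<Sum>a\<in>A. snd (f a))"
proof -
  interpret T: cring "triv_ext scale" by (rule triv_cring)
  show "finite A \<Longrightarrow> finsum (triv_ext scale) f A = (\<Sum>a\<in>A. fst (f a), \<Sum>a\<in>A. snd (f a))"
    by (induct A rule: finite_induct) (simp_all add: T.finsum_insert)
qed

lemma (in module) mat_mult_triv:
  "mat_mult (triv_ext scale) A B n = (\<lambda>i k. (\<Sum>j<n. fst (A i j) * fst (B j k),
      \<Sum>j<n. scale (fst (A i j)) (snd (B j k)) + scale (fst (B j k)) (snd (A i j))))"
  unfolding mat_mult_def by (simp add: finsum_triv)

abbreviation fr :: "'a::idom \<Rightarrow> 'a fract" where "fr a \<equiv> Fract a 1"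

lemma fr_add: "fr (a + b) = fr a + fr b" by simp
lemma fr_mult: "fr (a * b) = fr a * fr b" by simp
lemma fr_0: "fr 0 = 0" by (simp add: Zero_fract_def)
lemma fr_1: "fr 1 = 1" by (simp add: One_fract_def)
lemma fr_eq0: "fr a = 0 \<longleftrightarrow> a = 0" by (simp add: Zero_fract_def eq_fract)
lemma fr_sum: "fr (\<Sum>i\<in>A. f i) = (\<Sum>i\<in>A. fr (f i))"
proof (induct A rule: infinite_finite_induct)
  case (insert x F)
  then show ?case by (metis fr_add sum.insert)
qed (simp_all add: fr_0)
lemma fr_neg: "fr (- a) = - fr a" by simp

lemma module_fract: "module (\<lambda>(a::'a::idom) (x::'a fract). fr a * x)"
  by unfold_locales (simp_all only: fr_add fr_mult fr_1 distrib_left distrib_right mult.assoc mult_1_left)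

lemma module_vs: assumes "vector_space (scale :: 'a::idom fract \<Rightarrow> 'b::ab_group_add \<Rightarrow> 'b)"
  shows "module (\<lambda>a. scale (fr a))"
proof -
  interpret vector_space scale by fact
  show ?thesis by unfold_locales (simp_all only: scale_right_distrib scale_left_distrib fr_1 fr_add fr_mult scale_scale scale_one)
qed

lemma (in module) fst_hom: "ring_hom_cring (triv_ext scale) class_ring fst"
  by (intro ring_hom_cring.intro ring_hom_cring_axioms.intro triv_cring class_ring_cring ring_hom_memI) auto

lemma forward_A:
  fixes sm :: "'a::comm_ring_1 \<Rightarrow> 'b::ab_group_add \<Rightarrow> 'b"
  assumes "module sm" "elementary_divisor_ring (triv_ext sm)"
  shows "elementary_divisor_ring (class_ring :: 'a::comm_ring_1 ring)"
proof -
  interpret module sm by fact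
  show ?thesis
    apply (rule EDR_hom[OF fst_hom])
    using assms(2) by (auto intro: surjI[of fst "\<lambda>a. (a, 0)"] simp del: fr_add)
qed

lemma iso_hom:
  assumes vs: "vector_space (scale :: 'a::idom fract \<Rightarrow> 'b::ab_group_add \<Rightarrow> 'b)"
  shows "ring_hom_cring (triv_ext (\<lambda>a x. fr a * x)) (triv_ext (\<lambda>a. scale (fr a))) (\<lambda>(a, x). (a, scale x e0))"
proof -
  interpret V: vector_space scale by fact
  interpret M1: module "\<lambda>(a::'a) (x::'a fract). fr a * x" by (rule module_fract)
  interpret M2: module "\<lambda>a. scale (fr a)" by (rule module_vs[OF vs])
  show ?thesis
    by (intro ring_hom_cring.intro ring_hom_cring_axioms.intro M1.triv_cring M2.triv_cring ring_hom_memI)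
      (auto simp: V.scale_left_distrib V.scale_right_distrib)
qed

lemma (in cring) recover:
  assumes U: "carrier R = UNIV"
    and P: "mat_eq m m (mat_mult R P' P m) (id_mat R)"
    and Q: "mat_eq n n (mat_mult R Q Q' n) (id_mat R)"
    and ik: "i < m" "k < n"
  shows "mat_mult R (mat_mult R P' (mat_mult R (mat_mult R P M m) Q n) m) Q' n i k = M i k"
proof -
  have "mat_mult R (mat_mult R P' (mat_mult R (mat_mult R P M m) Q n) m) Q' n
      = mat_mult R (mat_mult R (mat_mult R P' P m) M m) (mat_mult R Q Q' n) n"
    by (simp add: mat_mult_assoc[OF U])
  then have "mat_mult R (mat_mult R P' (mat_mult R (mat_mult R P M m) Q n) m) Q' n i k
     = mat_mult R (mat_mult R (mat_mult R P' P m) M m) (mat_mult R Q Q' n) n i k" by simp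
  also have "\<dots> = mat_mult R (mat_mult R (mat_mult R P' P m) M m) (id_mat R) n i k"
    by (rule mat_mult_cong_right[OF U _ ik(2)]) (use Q in \<open>auto simp: mat_eq_def\<close>)
  also have "\<dots> = mat_mult R (mat_mult R P' P m) M m i k" by (rule mat_mult_id_right[OF U ik(2)])
  also have "\<dots> = mat_mult R (id_mat R) M m i k"
    by (rule mat_mult_cong_left[OF U _ ik(1)]) (use P in \<open>auto simp: mat_eq_def\<close>)
  also have "\<dots> = M i k" by (rule mat_mult_id_left[OF U ik(1)])
  finally show ?thesis .
qed

lemma (in module) bezout_E:
  assumes E: "elementary_divisor_ring (triv_ext scale)"
  shows "\<exists>f a1 a2. e1 = scale a1 f \<and> e2 = scale a2 f"
proof -
  interpret T: cring "triv_ext scale" by (rule triv_cring)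
  define M where "M = (\<lambda>(i::nat) (j::nat). if j = 0 then (0::'a, e1) else (0, e2))"
  have "admits_diagonal_reduction (triv_ext scale) 1 2 M"
    using E unfolding elementary_divisor_ring_def is_mat_def by auto
  then obtain P Q where PQ: "invertible_mat (triv_ext scale) 1 P" "invertible_mat (triv_ext scale) 2 Q"
    and D: "\<forall>i<1. \<forall>j<2. i \<noteq> j \<longrightarrow> mat_mult (triv_ext scale) (mat_mult (triv_ext scale) P M 1) Q 2 i j = (0, 0)"
    unfolding admits_diagonal_reduction_def Let_def by auto
  define D where "D = mat_mult (triv_ext scale) (mat_mult (triv_ext scale) P M 1) Q 2"
  obtain P' where P': "mat_eq 1 1 (mat_mult (triv_ext scale) P' P 1) (id_mat (triv_ext scale))"
    using PQ unfolding invertible_mat_def by auto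
  obtain Q' where Q': "mat_eq 2 2 (mat_mult (triv_ext scale) Q Q' 2) (id_mat (triv_ext scale))"
    using PQ unfolding invertible_mat_def by auto
  have D01: "D 0 1 = (0, 0)" using D unfolding D_def by auto
  have fD: "fst (D 0 0) = 0" unfolding D_def M_def by (simp add: mat_mult_triv numeral_2_eq_2 lessThan_Suc)
  have key: "M 0 k = mat_mult (triv_ext scale) (mat_mult (triv_ext scale) P' D 1) Q' 2 0 k" if "k < 2" for k
    unfolding D_def by (rule T.recover[symmetric, OF _ P' Q']) (use that in auto)
  have k0: "e1 = scale (fst (Q' 0 0) * fst (P' 0 0)) (snd (D 0 0))"
    using key[of 0] D01 fD by (simp add: mat_mult_triv M_def numeral_2_eq_2 lessThan_Suc)
  have k1: "e2 = scale (fst (Q' 0 1) * fst (P' 0 0)) (snd (D 0 0))"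
    using key[of 1] D01 fD by (simp add: mat_mult_triv M_def numeral_2_eq_2 lessThan_Suc)
  show ?thesis using k0 k1 by blast
qed

lemma dim_one_iff:
  assumes vs: "vector_space (scale :: 'k::field \<Rightarrow> 'b::ab_group_add \<Rightarrow> 'b)"
  shows "vector_space.dim scale UNIV = 1 \<longleftrightarrow> (\<exists>e0. e0 \<noteq> 0 \<and> (\<forall>e. \<exists>c. e = scale c e0))"
proof -
  interpret vector_space scale by fact
  show ?thesis
  proof
    assume "dim UNIV = 1"
    then obtain B where B: "independent B" "UNIV \<subseteq> span B" "card B = 1"
      using basis_exists[of UNIV] by metis
    then obtain e0 where "B = {e0}" using card_1_singletonE by blast
    then show "\<exists>e0. e0 \<noteq> 0 \<and> (\<forall>e. \<exists>c. e = scale c e0)"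
      using B span_singleton[of e0] by (auto simp: image_def)
  next
    assume "\<exists>e0. e0 \<noteq> 0 \<and> (\<forall>e. \<exists>c. e = scale c e0)"
    then obtain e0 where e0: "e0 \<noteq> 0" "\<forall>e. \<exists>c. e = scale c e0" by blast
    have "x \<in> range (\<lambda>k. scale k e0)" for x using e0(2) by (metis rangeI)
    then have "span {e0} = UNIV" using span_singleton[of e0] by auto
    then show "dim UNIV = 1"
      using dim_eq_card[of "{e0}" UNIV] e0 by auto
  qed
qed

lemma forward_dim:
  fixes scale :: "'a::idom fract \<Rightarrow> 'b::ab_group_add \<Rightarrow> 'b"
  assumes vs: "vector_space scale" and ne: "\<exists>e::'b. e \<noteq> 0"
    and E: "elementary_divisor_ring (triv_ext (\<lambda>a. scale (fr a)))"
  shows "vector_space.dim scale UNIV = 1"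
proof -
  interpret V: vector_space scale by fact
  interpret M: module "\<lambda>a. scale (fr a)" by (rule module_vs[OF vs])
  obtain e0 :: 'b where e0: "e0 \<noteq> 0" using ne by blast
  have "\<exists>c. e = scale c e0" for e
  proof -
    obtain f a1 a2 where f: "e0 = scale (fr a1) f" "e = scale (fr a2) f"
      using M.bezout_E[OF E, of e0 e] by blast
    have a1: "fr a1 \<noteq> 0" using f e0 by auto
    have "f = scale (inverse (fr a1)) e0" by (metis a1 V.scale_one V.scale_scale left_inverse f(1))
    then have "e = scale (fr a2 * inverse (fr a1)) e0" using f(2) by (simp only: V.scale_scale)
    then show ?thesis by blast
  qed
  then show ?thesis using dim_one_iff[OF vs] e0 by blast
qed

lemma sum_split_shift:
  fixes f :: "nat \<Rightarrow> 'c::comm_monoid_add"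
  assumes "r \<le> m"
  shows "(\<Sum>j<m. f j) = (\<Sum>j<r. f j) + (\<Sum>j<m-r. f (j+r))"
proof -
  obtain d where m: "m = r + d" using assms le_Suc_ex by blast
  have "(\<Sum>j<r+d. f j) = (\<Sum>j<r. f j) + (\<Sum>j<d. f (j+r))"
    by (induction d) (simp_all add: ac_simps)
  then show ?thesis using m by simp
qed

definition emb :: "nat \<Rightarrow> (nat \<Rightarrow> nat \<Rightarrow> 'c::comm_ring_1) \<Rightarrow> nat \<Rightarrow> nat \<Rightarrow> 'c" where
  "emb r P = (\<lambda>i j. if i < r \<or> j < r then (if i = j then 1 else 0) else P (i - r) (j - r))"

lemma emb_left:
  fixes U :: "nat \<Rightarrow> nat \<Rightarrow> 'c::comm_ring_1"
  assumes "r \<le> m"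
  shows "(\<Sum>j<m. emb r P i j * U j l) = (if i < r then U i l else \<Sum>j<m-r. P (i-r) j * U (j+r) l)"
proof -
  have "(\<Sum>j<m. emb r P i j * U j l) = (\<Sum>j<r. emb r P i j * U j l) + (\<Sum>j<m-r. emb r P i (j+r) * U (j+r) l)"
    by (rule sum_split_shift[OF assms])
  moreover have "(\<Sum>j<r. emb r P i j * U j l) = (if i < r then U i l else 0)"
    unfolding emb_def by (simp add: if_distrib[of "\<lambda>x. x * _"] sum.delta cong: if_cong)
  moreover have "(\<Sum>j<m-r. emb r P i (j+r) * U (j+r) l) = (if i < r then 0 else \<Sum>j<m-r. P (i-r) j * U (j+r) l)"
    unfolding emb_def by (auto intro: sum.cong)
  ultimately show ?thesis by simp
qed

lemma emb_right:
  fixes U :: "nat \<Rightarrow> nat \<Rightarrow> 'c::comm_ring_1"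
  assumes "r \<le> n"
  shows "(\<Sum>j<n. U i j * emb r Q j k) = (if k < r then U i k else \<Sum>j<n-r. U i (j+r) * Q j (k-r))"
proof -
  have "(\<Sum>j<n. U i j * emb r Q j k) = (\<Sum>j<r. U i j * emb r Q j k) + (\<Sum>j<n-r. U i (j+r) * emb r Q (j+r) k)"
    by (rule sum_split_shift[OF assms])
  moreover have "(\<Sum>j<r. U i j * emb r Q j k) = (if k < r then U i k else 0)"
    unfolding emb_def by (simp add: if_distrib[of "\<lambda>x. _ * x"] sum.delta' cong: if_cong)
  moreover have "(\<Sum>j<n-r. U i (j+r) * emb r Q (j+r) k) = (if k < r then 0 else \<Sum>j<n-r. U i (j+r) * Q j (k-r))"
    unfolding emb_def by (auto intro: sum.cong)
  ultimately show ?thesis by simp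
qed

lemma emb_inv:
  assumes r: "r \<le> m" and P: "invertible_mat (class_ring :: 'c::comm_ring_1 ring) (m - r) P"
  shows "invertible_mat (class_ring :: 'c ring) m (emb r P)"
proof -
  obtain P' where P': "mat_eq (m-r) (m-r) (mat_mult class_ring P P' (m-r)) (id_mat (class_ring :: 'c ring))"
    "mat_eq (m-r) (m-r) (mat_mult class_ring P' P (m-r)) (id_mat (class_ring :: 'c ring))"
    using P unfolding invertible_mat_def by auto
  have prod: "mat_eq m m (mat_mult class_ring (emb r A) (emb r B) m) (id_mat (class_ring :: 'c ring))"
    if AB: "mat_eq (m-r) (m-r) (mat_mult class_ring A B (m-r)) (id_mat (class_ring :: 'c ring))" for A B
    unfolding mat_eq_def mat_mult_class
  proof (intro allI impI)
    fix i k assume ik: "i < m" "k < m"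
    show "(\<Sum>j<m. emb r A i j * emb r B j k) = id_mat class_ring i k"
    proof (cases "i < r")
      case True
      then show ?thesis unfolding emb_left[OF r] by (simp add: emb_def id_mat_def)
    next
      case False
      show ?thesis
      proof (cases "k < r")
        case True
        then have "(\<Sum>j<m-r. A (i-r) j * emb r B (j+r) k) = 0" by (simp add: emb_def)
        then show ?thesis unfolding emb_left[OF r] using False True by (simp add: id_mat_def)
      next
        case kr: False
        have "(\<Sum>j<m-r. A (i-r) j * emb r B (j+r) k) = (\<Sum>j<m-r. A (i-r) j * B j (k-r))"
          using kr by (simp add: emb_def)
        also have "\<dots> = id_mat class_ring (i-r) (k-r)"
          using AB ik False kr unfolding mat_eq_def mat_mult_class by auto
        also have "\<dots> = id_mat class_ring i k" using False kr by (auto simp: id_mat_def)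
        finally show ?thesis unfolding emb_left[OF r] using False by simp
      qed
    qed
  qed
  show ?thesis unfolding invertible_mat_def
    apply (rule conjI, simp add: is_mat_def)
    apply (rule exI[of _ "emb r P'"])
    using prod[OF P'(1)] prod[OF P'(2)] by (simp add: is_mat_def)
qed

lemma common_denom:
  assumes "finite (S :: 'a::idom fract set)"
  shows "\<exists>s. s \<noteq> 0 \<and> (\<forall>x\<in>S. \<exists>a. fr s * x = fr a)"
  using assms
proof (induction S rule: finite_induct)
  case empty
  show ?case by (rule exI[of _ 1]) simp
next
  case (insert x F)
  then obtain s where s: "s \<noteq> 0" "\<forall>y\<in>F. \<exists>a. fr s * y = fr a" by blast
  obtain p q where x: "x = Fract p q" "q \<noteq> 0" by (cases x) 
  have "fr (s * q) * x = Fract (s * q * p) (1 * q)" unfolding x(1) by (rule mult_fract)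
  also have "\<dots> = fr (p * s)" using x(2) by (subst eq_fract(1)) (simp_all add: ac_simps)
  finally have xx: "fr (s * q) * x = fr (p * s)" .
  have yy: "\<exists>a. fr (s * q) * y = fr a" if yF: "y \<in> F" for y
  proof -
    obtain a where a: "fr s * y = fr a" using bspec[OF s(2) yF] by (elim exE)
    have "fr (s * q) * y = fr q * (fr s * y)" unfolding fr_mult by (simp only: ac_simps)
    also have "\<dots> = fr q * fr a" by (simp only: a)
    also have "\<dots> = fr (a * q)" unfolding fr_mult by (simp only: ac_simps)
    finally show ?thesis by (rule exI)
  qed
  have "\<forall>y\<in>insert x F. \<exists>a. fr (s * q) * y = fr a"
  proof
    fix y assume "y \<in> insert x F"
    then show "\<exists>a. fr (s * q) * y = fr a"
    proof
      assume "y = x" then show ?thesis using xx by (intro exI[of _ "p * s"]) simp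
    next
      assume "y \<in> F" then show ?thesis by (rule yy)
    qed
  qed
  moreover have "s * q \<noteq> 0" using s(1) x(2) by simp
  ultimately show ?case by (intro exI[of _ "s * q"] conjI)
qed

abbreviation TT :: "('a::idom \<times> 'a fract) ring" where
  "TT \<equiv> triv_ext (\<lambda>a x. fr a * x)"

lemma mat_mult_TT:
  "mat_mult (TT :: ('a::idom \<times> 'a fract) ring) A B n = (\<lambda>i k. (\<Sum>j<n. fst (A i j) * fst (B j k),
      \<Sum>j<n. fr (fst (A i j)) * snd (B j k) + fr (fst (B j k)) * snd (A i j)))"
proof -
  interpret MF: module "\<lambda>(a::'a) (x::'a fract). fr a * x" by (rule module_fract)
  show ?thesis by (rule MF.mat_mult_triv)
qed

lemma TT_cring: "cring (TT :: ('a::idom \<times> 'a fract) ring)"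
proof -
  interpret MF: module "\<lambda>(a::'a) (x::'a fract). fr a * x" by (rule module_fract)
  show ?thesis by (rule MF.triv_cring)
qed

lemma L_hom: "ring_hom_cring (class_ring :: 'a::idom ring) TT (\<lambda>a. (a, 0))"
  by (intro ring_hom_cring.intro ring_hom_cring_axioms.intro TT_cring class_ring_cring ring_hom_memI)
     (auto simp: fr_0)

lemma L_inv:
  "invertible_mat (class_ring :: 'a::idom ring) k P \<Longrightarrow> invertible_mat TT k (\<lambda>i j. (P i j, 0))"
  using ring_hom_cring.hom_invertible[OF L_hom, of k P] by simp

lemma fr_delta: "fr (if c then 1 else 0) = (if c then 1 else 0)"
  by (simp add: fr_0 fr_1)

lemma L_left:
  "mat_mult (TT :: ('a::idom \<times> 'a fract) ring) (\<lambda>i j. (P i j, 0)) (\<lambda>i k. (U i k, fr (W i k) / c)) m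
   = (\<lambda>i k. (\<Sum>j<m. P i j * U j k, fr (\<Sum>j<m. P i j * W j k) / c))"
proof (intro ext)
  fix i k
  have "(\<Sum>j<m. fr (P i j) * (fr (W j k) / c) + fr (U j k) * 0) = (\<Sum>j<m. fr (P i j * W j k) / c)"
    by (intro sum.cong refl) (simp only: fr_mult mult_zero_right add_0_right times_divide_eq_right)
  also have "\<dots> = fr (\<Sum>j<m. P i j * W j k) / c" by (simp only: fr_sum sum_divide_distrib)
  finally show "mat_mult TT (\<lambda>i j. (P i j, 0)) (\<lambda>i k. (U i k, fr (W i k) / c)) m i k =
    (\<Sum>j<m. P i j * U j k, fr (\<Sum>j<m. P i j * W j k) / c)"
    unfolding mat_mult_TT by (simp only: fst_conv snd_conv)
qed

lemma L_right:
  "mat_mult (TT :: ('a::idom \<times> 'a fract) ring) (\<lambda>i k. (U i k, fr (W i k) / c)) (\<lambda>i j. (Q i j, 0)) n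
   = (\<lambda>i k. (\<Sum>j<n. U i j * Q j k, fr (\<Sum>j<n. W i j * Q j k) / c))"
proof (intro ext)
  fix i k
  have "(\<Sum>j<n. fr (U i j) * 0 + fr (Q j k) * (fr (W i j) / c)) = (\<Sum>j<n. fr (W i j * Q j k) / c)"
    by (intro sum.cong refl) (simp only: fr_mult mult_zero_right mult_zero_left add_0_left times_divide_eq_right mult.commute)
  also have "\<dots> = fr (\<Sum>j<n. W i j * Q j k) / c" by (simp only: fr_sum sum_divide_distrib)
  finally show "mat_mult TT (\<lambda>i k. (U i k, fr (W i k) / c)) (\<lambda>i j. (Q i j, 0)) n i k =
    (\<Sum>j<n. U i j * Q j k, fr (\<Sum>j<n. W i j * Q j k) / c)"
    unfolding mat_mult_TT by (simp only: fst_conv snd_conv)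
qed

lemma sum_delta_r1: "(k::nat) < n \<Longrightarrow> (\<Sum>j<n. f j * (if j = k then 1 else 0)) = (f k :: 'c::semiring_1)"
proof -
  assume k: "k < n"
  have "(\<Sum>j<n. f j * (if j = k then 1 else 0)) = (\<Sum>j<n. if j = k then f j else 0)"
    by (intro sum.cong) auto
  also have "\<dots> = f k" using k by (subst sum.delta) auto
  finally show ?thesis .
qed
lemma sum_delta_r2: "(k::nat) < n \<Longrightarrow> (\<Sum>j<n. (if j = k then 1 else 0) * f j) = (f k :: 'c::semiring_1)"
proof -
  assume k: "k < n"
  have "(\<Sum>j<n. (if j = k then 1 else 0) * f j) = (\<Sum>j<n. if j = k then f j else 0)"
    by (intro sum.cong) auto
  also have "\<dots> = f k" using k by (subst sum.delta) auto
  finally show ?thesis .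
qed
lemma sum_delta_l1: "(i::nat) < n \<Longrightarrow> (\<Sum>j<n. (if i = j then 1 else 0) * f j) = (f i :: 'c::semiring_1)"
proof -
  assume k: "i < n"
  have "(\<Sum>j<n. (if i = j then 1 else 0) * f j) = (\<Sum>j<n. if i = j then f j else 0)"
    by (intro sum.cong) auto
  also have "\<dots> = f i" using k by (subst sum.delta') auto
  finally show ?thesis .
qed
lemma sum_delta_l2: "(i::nat) < n \<Longrightarrow> (\<Sum>j<n. f j * (if i = j then 1 else 0)) = (f i :: 'c::semiring_1)"
proof -
  assume k: "i < n"
  have "(\<Sum>j<n. f j * (if i = j then 1 else 0)) = (\<Sum>j<n. if i = j then f j else 0)"
    by (intro sum.cong) auto
  also have "\<dots> = f i" using k by (subst sum.delta') auto
  finally show ?thesis .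
qed

lemma IdY_right:
  assumes "k < n"
  shows "mat_mult (TT :: ('a::idom \<times> 'a fract) ring) M (\<lambda>i j. (if i = j then 1 else 0, Y i j)) n i k
    = (fst (M i k), snd (M i k) + (\<Sum>j<n. fr (fst (M i j)) * Y j k))"
proof -
  have "(\<Sum>j<n. fr (fst (M i j)) * Y j k + fr (if j = k then 1 else 0) * snd (M i j))
      = (\<Sum>j<n. fr (fst (M i j)) * Y j k) + (\<Sum>j<n. (if j = k then 1 else 0) * snd (M i j))"
    by (simp only: sum.distrib fr_delta)
  also have "\<dots> = snd (M i k) + (\<Sum>j<n. fr (fst (M i j)) * Y j k)"
    by (simp only: sum_delta_r2[OF assms] add.commute)
  finally show ?thesis unfolding mat_mult_TT
    by (simp only: fst_conv snd_conv sum_delta_r1[OF assms])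
qed

lemma IdX_left:
  assumes "i < m"
  shows "mat_mult (TT :: ('a::idom \<times> 'a fract) ring) (\<lambda>i j. (if i = j then 1 else 0, X i j)) M m i k
    = (fst (M i k), snd (M i k) + (\<Sum>j<m. fr (fst (M j k)) * X i j))"
proof -
  have "(\<Sum>j<m. fr (if i = j then 1 else 0) * snd (M j k) + fr (fst (M j k)) * X i j)
      = (\<Sum>j<m. (if i = j then 1 else 0) * snd (M j k)) + (\<Sum>j<m. fr (fst (M j k)) * X i j)"
    by (simp only: sum.distrib fr_delta)
  also have "\<dots> = snd (M i k) + (\<Sum>j<m. fr (fst (M j k)) * X i j)"
    by (simp only: sum_delta_l1[OF assms])
  finally show ?thesis unfolding mat_mult_TT
    by (simp only: fst_conv snd_conv sum_delta_l1[OF assms])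
qed

lemma Id_inv:
  "invertible_mat (TT :: ('a::idom \<times> 'a fract) ring) n (\<lambda>i j. (if i = j then 1 else 0, Y i j))"
proof -
  have e: "mat_eq n n (mat_mult TT (\<lambda>i j. (if i = j then 1 else 0, Y i j)) (\<lambda>i j. (if i = j then 1 else 0, Y' i j)) n) (id_mat (TT :: ('a::idom \<times> 'a fract) ring))"
    if YY: "\<And>i j. Y i j + Y' i j = 0" for Y' Y :: "nat \<Rightarrow> nat \<Rightarrow> 'a fract"
    unfolding mat_eq_def
  proof (intro allI impI)
    fix i k assume ik: "i < n" "k < n"
    have "(\<Sum>j<n. fr (fst (if i = j then 1 else 0 :: 'a, Y i j)) * Y' j k) = (\<Sum>j<n. (if i = j then 1 else 0) * Y' j k)"
      by (simp only: fst_conv fr_delta)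
    also have "\<dots> = Y' i k" by (rule sum_delta_l1[OF ik(1)])
    finally have s: "(\<Sum>j<n. fr (fst (if i = j then 1 else 0 :: 'a, Y i j)) * Y' j k) = Y' i k" .
    show "mat_mult TT (\<lambda>i j. (if i = j then 1 else 0, Y i j)) (\<lambda>i j. (if i = j then 1 else 0, Y' i j)) n i k = id_mat TT i k"
      unfolding IdY_right[OF ik(2)] s using YY[of i k] by (auto simp: id_mat_def)
  qed
  show ?thesis unfolding invertible_mat_def
    apply (rule conjI, simp add: is_mat_def)
    apply (rule exI[of _ "\<lambda>i j. (if i = j then 1 else 0, - Y i j)"])
    apply (simp add: is_mat_def)
    using e[of Y "\<lambda>i j. - Y i j"] e[of "\<lambda>i j. - Y i j" Y] by simp
qed

lemma Fract_0_left [simp]: "Fract 0 b = (0 :: 'a::idom fract)"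
  by (metis Zero_fract_def eq_fract(3))

lemma emb_right':
  fixes u :: "nat \<Rightarrow> 'c::comm_ring_1"
  assumes "r \<le> n"
  shows "(\<Sum>j<n. u j * emb r Q j k) = (if k < r then u k else \<Sum>j<n-r. u (j+r) * Q j (k-r))"
  using emb_right[OF assms, of "\<lambda>_ j. u j"] by simp

lemma fr_cancel: "(a::'a::idom) \<noteq> 0 \<Longrightarrow> fr a * (x / fr a) = x"
proof -
  assume "a \<noteq> 0"
  then have "fr a \<noteq> 0" by (simp add: fr_eq0)
  then show ?thesis by simp
qed

theorem backward_T:
  assumes A: "elementary_divisor_ring (class_ring :: 'a::idom ring)"
  shows "elementary_divisor_ring (TT :: ('a \<times> 'a fract) ring)"
  unfolding elementary_divisor_ring_def
proof (intro allI impI)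
  fix m n :: nat and M :: "nat \<Rightarrow> nat \<Rightarrow> 'a \<times> 'a fract"
  interpret T: cring "TT :: ('a \<times> 'a fract) ring" by (rule TT_cring)
  have U: "carrier (TT :: ('a \<times> 'a fract) ring) = UNIV" by simp
  define M0 where "M0 = (\<lambda>i j. fst (M i j))"
  have "admits_diagonal_reduction class_ring m n M0"
    using A unfolding elementary_divisor_ring_def is_mat_def by simp
  then obtain P0 Q0 where P0: "invertible_mat class_ring m P0" and Q0: "invertible_mat class_ring n Q0"
    and DD: "let D = mat_mult class_ring (mat_mult class_ring P0 M0 m) Q0 n in
           (\<forall>i<m. \<forall>j<n. i \<noteq> j \<longrightarrow> D i j = \<zero>\<^bsub>class_ring\<^esub>) \<and>
           (\<forall>i. Suc i < min m n \<longrightarrow> D i i divides\<^bsub>class_ring\<^esub> D (Suc i) (Suc i))"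
    unfolding admits_diagonal_reduction_def by blast
  define D0 where "D0 = (\<lambda>i k. \<Sum>j<n. (\<Sum>l<m. P0 i l * M0 l j) * Q0 j k)"
  have D0z: "\<And>i j. i < m \<Longrightarrow> j < n \<Longrightarrow> i \<noteq> j \<Longrightarrow> D0 i j = 0"
    and D0c: "\<And>i. Suc i < min m n \<Longrightarrow> D0 i i dvd D0 (Suc i) (Suc i)"
    using DD unfolding D0_def Let_def mat_mult_class divides_class by auto
  define L where "L = (\<lambda>(P::nat\<Rightarrow>nat\<Rightarrow>'a) (i::nat) (j::nat). (P i j, 0::'a fract))"
  define M1 where "M1 = mat_mult TT (mat_mult TT (L P0) M m) (L Q0) n"
  have fM1: "fst (M1 i k) = D0 i k" for i k
    unfolding M1_def D0_def L_def M0_def mat_mult_TT by (simp only: fst_conv)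
  define V1 where "V1 = (\<lambda>i k. snd (M1 i k))"
  have red1: "admits_diagonal_reduction TT m n M" if a1: "admits_diagonal_reduction TT m n M1"
  proof -
    have "admits_diagonal_reduction TT m n (mat_mult TT (\<lambda>i j. (P0 i j, 0)) M m)"
      by (rule T.admits_right[OF U L_inv[OF Q0]]) (use a1 in \<open>simp add: M1_def L_def\<close>)
    then show ?thesis by (rule T.admits_left[OF U L_inv[OF P0]])
  qed

  define r where "r = (LEAST i. min m n \<le> i \<or> D0 i i = 0)"
  have r_le: "r \<le> min m n" unfolding r_def by (rule Least_le) simp
  have r_nz: "D0 i i \<noteq> 0" if "i < r" for i
    using not_less_Least[OF that[unfolded r_def]] by simp
  have hr: "min m n \<le> r \<or> D0 r r = 0" unfolding r_def by (rule LeastI[of _ "min m n"]) simp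
  have r_z': "r \<le> i \<longrightarrow> i < min m n \<longrightarrow> D0 i i = 0" for i
  proof (induction i)
    case 0
    then show ?case using hr by auto
  next
    case (Suc i)
    show ?case
    proof (intro impI)
      assume a: "r \<le> Suc i" "Suc i < min m n"
      show "D0 (Suc i) (Suc i) = 0"
      proof (cases "r = Suc i")
        case True then show ?thesis using hr a by auto
      next
        case False
        then have "D0 i i = 0" using Suc a by auto
        then show ?thesis using D0c[OF a(2)] by simp
      qed
    qed
  qed
  have r_z: "D0 i i = 0" if "r \<le> i" "i < min m n" for i using r_z' that by blast
  have D0_zero: "D0 i k = 0" if "i < m" "k < n" "r \<le> i \<or> r \<le> k" for i k
  proof (cases "i = k")
    case True then show ?thesis using r_z that by auto
  next
    case False then show ?thesis using D0z that by auto
  qed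

  define Y where "Y = (\<lambda>i j. if i < r then - V1 i j / fr (D0 i i) else 0)"
  define M2 where "M2 = (\<lambda>i k. (D0 i k, if i < r then 0 else V1 i k))"
  have M2eq: "mat_mult TT M1 (\<lambda>i j. (if i = j then 1 else 0, Y i j)) n i k = M2 i k" if ik: "i < m" "k < n" for i k
  proof -
    have "(\<Sum>j<n. fr (fst (M1 i j)) * Y j k) = (\<Sum>j<n. if j = i then fr (D0 i i) * Y i k else 0)"
      by (intro sum.cong refl) (use ik D0z in \<open>auto simp: fM1 fr_0\<close>)
    also have "\<dots> = (if i < n then fr (D0 i i) * Y i k else 0)" by simp
    also have "\<dots> = (if i < r then - V1 i k else 0)"
      using r_le r_nz by (auto simp: Y_def fr_cancel fr_eq0)
    finally have s: "(\<Sum>j<n. fr (fst (M1 i j)) * Y j k) = (if i < r then - V1 i k else 0)" .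
    show ?thesis unfolding IdY_right[OF ik(2)] s by (simp add: M2_def fM1 V1_def)
  qed
  have red2: "admits_diagonal_reduction TT m n M1" if "admits_diagonal_reduction TT m n M2"
    by (rule T.admits_right[OF U Id_inv], rule T.admits_cong[OF U _ that]) (use M2eq in auto)

  define X where "X = (\<lambda>i j. if j < r then - snd (M2 i j) / fr (D0 j j) else 0)"
  define M3 where "M3 = (\<lambda>i k. (D0 i k, if i < r \<or> k < r then 0 else V1 i k))"
  have M3eq: "mat_mult TT (\<lambda>i j. (if i = j then 1 else 0, X i j)) M2 m i k = M3 i k" if ik: "i < m" "k < n" for i k
  proof -
    have "(\<Sum>j<m. fr (fst (M2 j k)) * X i j) = (\<Sum>j<m. if j = k then fr (D0 k k) * X i k else 0)"
      by (intro sum.cong refl) (use ik D0z in \<open>auto simp: M2_def fr_0\<close>)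
    also have "\<dots> = (if k < m then fr (D0 k k) * X i k else 0)" by simp
    also have "\<dots> = (if k < r then - snd (M2 i k) else 0)"
      using r_le r_nz by (auto simp: X_def fr_cancel fr_eq0)
    finally have s: "(\<Sum>j<m. fr (fst (M2 j k)) * X i j) = (if k < r then - snd (M2 i k) else 0)" .
    show ?thesis unfolding IdX_left[OF ik(1)] s by (simp add: M2_def M3_def)
  qed
  have red3: "admits_diagonal_reduction TT m n M2" if "admits_diagonal_reduction TT m n M3"
    by (rule T.admits_left[OF U Id_inv], rule T.admits_cong[OF U _ that]) (use M3eq in auto)

  have fin: "finite ((\<lambda>(i, k). V1 i k) ` ({..<m} \<times> {..<n}))" by simp
  obtain s where s: "s \<noteq> 0" "\<forall>x \<in> (\<lambda>(i, k). V1 i k) ` ({..<m} \<times> {..<n}). \<exists>a. fr s * x = fr a"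
    using common_denom[OF fin] by (elim exE conjE) (rule that)
  have sV: "\<exists>a. fr s * V1 i k = fr a" if "i < m" "k < n" for i k
  proof -
    have "V1 i k \<in> (\<lambda>(i, k). V1 i k) ` ({..<m} \<times> {..<n})" using that by force
    then show ?thesis by (rule bspec[OF s(2)])
  qed
  have frs: "fr s \<noteq> 0" using s(1) by (simp add: fr_eq0)
  define N where "N = (\<lambda>i k. if i < r \<or> k < r then 0 else (SOME a. fr s * V1 i k = fr a))"
  define M3' where "M3' = (\<lambda>i k. (D0 i k, fr (N i k) / fr s))"
  have M3'eq: "M3 i k = M3' i k" if ik: "i < m" "k < n" for i k
  proof (cases "i < r \<or> k < r")
    case True
    then show ?thesis by (simp add: M3_def M3'_def N_def fr_0)
  next
    case False
    have "fr s * V1 i k = fr (N i k)" using someI_ex[OF sV[OF ik]] False by (simp add: N_def)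
    then have "fr (N i k) / fr s = V1 i k" using frs by (metis nonzero_mult_div_cancel_left)
    then show ?thesis using False by (simp add: M3_def M3'_def)
  qed
  have red4: "admits_diagonal_reduction TT m n M3" if "admits_diagonal_reduction TT m n M3'"
    by (rule T.admits_cong[OF U _ that]) (use M3'eq in auto)

  define N' where "N' = (\<lambda>i k. N (i + r) (k + r))"
  have "admits_diagonal_reduction class_ring (m - r) (n - r) N'"
    using A unfolding elementary_divisor_ring_def is_mat_def by simp
  then obtain P' Q' where P': "invertible_mat class_ring (m - r) P'" and Q': "invertible_mat class_ring (n - r) Q'"
    and GG: "let D = mat_mult class_ring (mat_mult class_ring P' N' (m - r)) Q' (n - r) in
           (\<forall>i<m - r. \<forall>j<n - r. i \<noteq> j \<longrightarrow> D i j = \<zero>\<^bsub>class_ring\<^esub>) \<and>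
           (\<forall>i. Suc i < min (m - r) (n - r) \<longrightarrow> D i i divides\<^bsub>class_ring\<^esub> D (Suc i) (Suc i))"
    unfolding admits_diagonal_reduction_def by blast
  define G where "G = (\<lambda>i k. \<Sum>j<n - r. (\<Sum>l<m - r. P' i l * N' l j) * Q' j k)"
  have Gz: "\<And>i j. i < m - r \<Longrightarrow> j < n - r \<Longrightarrow> i \<noteq> j \<Longrightarrow> G i j = 0"
    and Gc: "\<And>i. Suc i < min (m - r) (n - r) \<Longrightarrow> G i i dvd G (Suc i) (Suc i)"
    using GG unfolding G_def Let_def mat_mult_class divides_class by auto
  have rm: "r \<le> m" "r \<le> n" using r_le by auto
  define M5 where "M5 = mat_mult TT (mat_mult TT (L (emb r P')) M3' m) (L (emb r Q')) n"
  have M5_form: "M5 = (\<lambda>i k. (\<Sum>j<n. (\<Sum>l<m. emb r P' i l * D0 l j) * emb r Q' j k,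
      fr (\<Sum>j<n. (\<Sum>l<m. emb r P' i l * N l j) * emb r Q' j k) / fr s))"
    unfolding M5_def M3'_def L_def by (simp only: L_left L_right)
  have blkD: "(\<Sum>j<n. (\<Sum>l<m. emb r P' i l * D0 l j) * emb r Q' j k) = D0 i k" if ik: "i < m" "k < n" for i k
  proof -
    have W: "(\<Sum>l<m. emb r P' i l * D0 l j) = D0 i j" if j: "j < n" for j
      unfolding emb_left[OF rm(1)] using D0_zero ik j by auto
    have "(\<Sum>j<n. (\<Sum>l<m. emb r P' i l * D0 l j) * emb r Q' j k) = (\<Sum>j<n. D0 i j * emb r Q' j k)"
      by (intro sum.cong refl) (simp add: W)
    also have "\<dots> = D0 i k" unfolding emb_right[OF rm(2)] using D0_zero ik by auto
    finally show ?thesis .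
  qed
  have NZ: "N i k = 0" if "i < r \<or> k < r" for i k using that by (simp add: N_def)
  have blkN: "(\<Sum>j<n. (\<Sum>l<m. emb r P' i l * N l j) * emb r Q' j k) = (if i < r \<or> k < r then 0 else G (i - r) (k - r))"
    if ik: "i < m" "k < n" for i k
  proof -
    have W: "(\<Sum>l<m. emb r P' i l * N l j) = (if i < r \<or> j < r then 0 else (\<Sum>l<m - r. P' (i - r) l * N' l (j - r)))" for j
      unfolding emb_left[OF rm(1)] N'_def using NZ by auto
    have "(\<Sum>j<n. (\<Sum>l<m. emb r P' i l * N l j) * emb r Q' j k)
       = (\<Sum>j<n. (if i < r \<or> j < r then 0 else (\<Sum>l<m - r. P' (i - r) l * N' l (j - r))) * emb r Q' j k)"
      by (simp only: W)
    also have "\<dots> = (if i < r \<or> k < r then 0 else G (i - r) (k - r))"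
      unfolding emb_right'[OF rm(2)] G_def by auto
    finally show ?thesis .
  qed
  define Dfin where "Dfin = (\<lambda>i k. (D0 i k, fr (if i < r \<or> k < r then 0 else G (i - r) (k - r)) / fr s))"
  have M5D: "M5 i k = Dfin i k" if "i < m" "k < n" for i k
    unfolding M5_form Dfin_def using blkD[OF that] blkN[OF that] by simp
  have red5: "admits_diagonal_reduction TT m n M3'" if a5: "admits_diagonal_reduction TT m n M5"
  proof -
    have "admits_diagonal_reduction TT m n (mat_mult TT (\<lambda>i j. (emb r P' i j, 0)) M3' m)"
      by (rule T.admits_right[OF U L_inv[OF emb_inv[OF rm(2) Q']]]) (use a5 in \<open>simp add: M5_def L_def\<close>)
    then show ?thesis by (rule T.admits_left[OF U L_inv[OF emb_inv[OF rm(1) P']]])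
  qed

  have offd: "\<forall>i<m. \<forall>j<n. i \<noteq> j \<longrightarrow> Dfin i j = \<zero>\<^bsub>TT\<^esub>"
  proof (intro allI impI)
    fix i j assume ij: "i < m" "j < n" "i \<noteq> j"
    have "(if i < r \<or> j < r then 0 else G (i - r) (j - r)) = 0"
      using Gz[of "i - r" "j - r"] ij by auto
    then show "Dfin i j = \<zero>\<^bsub>TT\<^esub>" using D0z[OF ij] by (simp add: Dfin_def fr_0)
  qed
  have chain: "\<forall>i. Suc i < min m n \<longrightarrow> Dfin i i divides\<^bsub>TT\<^esub> Dfin (Suc i) (Suc i)"
  proof (intro allI impI)
    fix i assume i: "Suc i < min m n"
    show "Dfin i i divides\<^bsub>TT\<^esub> Dfin (Suc i) (Suc i)"
      unfolding factor_def
    proof (cases "Suc i < r")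
      case True
      obtain b where b: "D0 (Suc i) (Suc i) = D0 i i * b" using D0c[OF i] by (elim dvdE)
      show "\<exists>c\<in>carrier TT. Dfin (Suc i) (Suc i) = Dfin i i \<otimes>\<^bsub>TT\<^esub> c"
        using True b by (intro bexI[of _ "(b, 0)"]) (simp_all add: Dfin_def fr_0)
    next
      case False
      show "\<exists>c\<in>carrier TT. Dfin (Suc i) (Suc i) = Dfin i i \<otimes>\<^bsub>TT\<^esub> c"
      proof (cases "Suc i = r")
        case True
        then have ir: "i < r" by simp
        have d: "D0 i i \<noteq> 0" by (rule r_nz[OF ir])
        have dr: "D0 (Suc i) (Suc i) = 0" using r_z[of "Suc i"] True i by simp
        define y where "y = fr (G 0 0) / fr s"
        have "Dfin (Suc i) (Suc i) = (0, y)" using True dr by (simp add: Dfin_def y_def)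
        moreover have "Dfin i i = (D0 i i, 0)" using ir by (simp add: Dfin_def fr_0)
        ultimately show ?thesis
          using d by (intro bexI[of _ "(0, y / fr (D0 i i))"]) (simp_all add: fr_0 fr_cancel fr_eq0)
      next
        case False2: False
        then have ri: "r \<le> i" using False by simp
        have si: "Suc i - r = Suc (i - r)" using ri by simp
        have gi: "Suc (i - r) < min (m - r) (n - r)" using i ri by auto
        obtain b where b: "G (Suc (i - r)) (Suc (i - r)) = G (i - r) (i - r) * b" using Gc[OF gi] by (elim dvdE)
        have e1: "Dfin i i = (0, fr (G (i - r) (i - r)) / fr s)"
          using r_z[of i] ri i by (simp add: Dfin_def)
        have e2: "Dfin (Suc i) (Suc i) = (0, fr (G (i - r) (i - r) * b) / fr s)"
          using r_z[of "Suc i"] ri i si b by (simp add: Dfin_def)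
        have "fr (G (i - r) (i - r) * b) / fr s = fr b * (fr (G (i - r) (i - r)) / fr s)"
          by (simp only: fr_mult times_divide_eq_right mult.commute)
        then show ?thesis unfolding e1 e2 by (intro bexI[of _ "(b, 0)"]) (simp_all add: fr_0)
      qed
    qed
  qed
  have aD: "admits_diagonal_reduction TT m n Dfin" by (rule T.admits_diag[OF U offd chain])
  have "admits_diagonal_reduction TT m n M5" by (rule T.admits_cong[OF U _ aD]) (use M5D in auto)
  then show "admits_diagonal_reduction TT m n M"
    by (rule red1[OF red2[OF red3[OF red4[OF red5]]]])
qed

theorem theorem3p12:
  fixes scale :: "'a::idom fract \<Rightarrow> 'b::ab_group_add \<Rightarrow> 'b"
  assumes "vector_space scale"
    and "\<exists>e::'b. e \<noteq> 0"
  shows "elementary_divisor_ring (triv_ext (\<lambda>a. scale (Fract a 1)))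
     \<longleftrightarrow> (elementary_divisor_ring (class_ring :: 'a ring) \<and> vector_space.dim scale UNIV = 1)"
proof
  assume E: "elementary_divisor_ring (triv_ext (\<lambda>a. scale (Fract a 1)))"
  have "elementary_divisor_ring (class_ring :: 'a ring)"
    by (rule forward_A[OF module_vs[OF assms(1)] E])
  moreover have "vector_space.dim scale UNIV = 1"
    by (rule forward_dim[OF assms E])
  ultimately show "elementary_divisor_ring (class_ring :: 'a ring) \<and> vector_space.dim scale UNIV = 1" ..
next
  assume H: "elementary_divisor_ring (class_ring :: 'a ring) \<and> vector_space.dim scale UNIV = 1"
  then obtain e0 where e0: "e0 \<noteq> 0" "\<forall>e. \<exists>c. e = scale c e0"
    using dim_one_iff[OF assms(1)] by blast
  have s: "surj (\<lambda>(a::'a, x). (a, scale x e0))"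
    unfolding surj_def
  proof (intro allI)
    fix y :: "'a \<times> 'b"
    obtain a e where y: "y = (a, e)" by (cases y)
    obtain c where c: "e = scale c e0" using e0(2) by blast
    show "\<exists>x. y = (\<lambda>(a, x). (a, scale x e0)) x"
      using y c by (intro exI[of _ "(a, c)"]) simp
  qed
  show "elementary_divisor_ring (triv_ext (\<lambda>a. scale (Fract a 1)))"
    by (rule EDR_hom[OF iso_hom[OF assms(1), of e0] _ _ s backward_T]) (use H in auto)
qed

end
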